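(* Let $\omega=SSw$ be an attack cycle starting with two letters S, where $w=w_1\cdots w_\nu$ with $w_\nu=H$, and let $X_0=0$, $X_i=X_{i-1}+1$ if $w_i=S$ and $X_i=X_{i-1}-1$ if $w_i=H$. Define $$D(\omega)=\sum_{i}\,(X_i+3),$$ the sum being over all indices $1\le i\le\nu$ with $X_i<n_1-2$ and $X_i<X_{i-1}$. Then $$\mathbb{E}[D(\omega)\mid\omega=SS\ldots]=\frac{p}{(p-q)^2}\Bigl(2p-q-\bigl(p+n_1(p-q)\bigr)\Bigl(\frac qp\Bigr)^{n_1-1}\Bigr).$$
   Context: Honest hashrate $p$, attacker hashrate $q$, $p+q=1$, $0<q<p$; $n_1\ge2$ is an integer. The attack cycles starting with SS are the words $SSw'H$ with $w'$ a Dyck word over $\{S,H\}$ and $\mathbb{P}[SSw'H]=q^2p(pq)^{|w'|}$ ($|w'|$ half the length of $w'$); equivalently, conditional on starting with SS, $(X_i)$ is a random walk from $0$ with up-step probability $q$ and down-step probability $p$, stopped at its first visit to $-1$ (time $\nu$). (For an honest block at index $i$ of $w$, $X_i+2$ is its relative height, i.e. the height of the attacker's fork at its creation minus its own height, and $X_i+3$ is its distance to a nephew if it becomes an uncle.) *)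

theory Defs
  imports "HOL-Analysis.Analysis"
begin

text \<open>Words over {S,H} are bool lists: True = S (attacker block), False = H (honest block).\<close>

definition step :: "bool \<Rightarrow> int" where
  "step b = (if b then 1 else -1)"

definition walk :: "bool list \<Rightarrow> nat \<Rightarrow> int" where
  "walk w i = sum_list (map step (take i w))"

definition dyck :: "bool list \<Rightarrow> bool" where
  "dyck w \<longleftrightarrow> (\<forall>i\<le>length w. walk w i \<ge> 0) \<and> walk w (length w) = 0"

definition Dsum :: "nat \<Rightarrow> bool list \<Rightarrow> real" where
  "Dsum n1 w = (\<Sum>i\<in>{1..length w}.
      if walk w i < int n1 - 2 \<and> walk w i < walk w (i - 1)
      then real_of_int (walk w i + 3) else 0)"

text \<open>Conditional probability of the attack cycle SS w' H given that it starts with SS: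
  P[SSw'H] / q^2 = p (pq)^{|w'|}, |w'| = half length of w'.\<close>
definition cond_prob :: "real \<Rightarrow> real \<Rightarrow> bool list \<Rightarrow> real" where
  "cond_prob p q w' = p * (p * q) ^ (length w' div 2)"

end

theory Submission
  imports Defs
begin


lemma walk_0[simp]: "walk w 0 = 0"
  by (simp add: walk_def)

lemma walk_Cons_Suc[simp]: "walk (b#w) (Suc i) = step b + walk w i"
  by (simp add: walk_def)

fun lv :: "nat \<Rightarrow> bool list \<Rightarrow> nat option" where
  "lv n [] = Some n"
| "lv n (True#w) = lv (Suc n) w"
| "lv n (False#w) = (case n of 0 \<Rightarrow> None | Suc m \<Rightarrow> lv m w)"

lemma lv_append: "lv n (u@v) = (case lv n u of None \<Rightarrow> None | Some m \<Rightarrow> lv m v)"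
proof (induction u arbitrary: n)
  case Nil then show ?case by simp
next
  case (Cons b u) then show ?case by (cases b; cases n) auto
qed

lemma lv_shift: "lv n u = Some m \<Longrightarrow> lv (n+k) u = Some (m+k)"
proof (induction u arbitrary: n)
  case Nil then show ?case by simp
next
  case (Cons b u) then show ?case by (cases b; cases n) (auto dest: Cons.IH[of "Suc _"])
qed

lemma all_le_Suc_conv: "(\<forall>i\<le>Suc n. P i) = (P 0 \<and> (\<forall>i\<le>n. P (Suc i)))"
  by (metis Suc_le_mono le0 not0_implies_Suc)

lemma lv_walk: "lv n w = (if (\<forall>i\<le>length w. 0 \<le> int n + walk w i)
   then Some (nat (int n + walk w (length w))) else None)"
proof (induction w arbitrary: n)
  case Nil then show ?case by simp
next
  case (Cons b w)
  show ?case
  proof (cases b)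
    case True
    then show ?thesis using Cons[of "Suc n"]
      by (simp add: all_le_Suc_conv step_def algebra_simps)
  next
    case False
    show ?thesis
    proof (cases n)
      case 0
      have "walk (False#w) (Suc 0) = -1" by (simp add: step_def)
      then have "\<not> (\<forall>i\<le>length (b#w). 0 \<le> int n + walk (b#w) i)"
      proof -
        have "Suc 0 \<le> length (b#w)" by simp
        then show ?thesis using False 0 \<open>walk (False#w) (Suc 0) = -1\<close>
          by (intro notI) (drule spec[of _ "Suc 0"], simp)
      qed
      then show ?thesis using False 0 by simp
    next
      case (Suc m)
      then show ?thesis using False Cons[of m]
        by (simp add: all_le_Suc_conv step_def algebra_simps)
    qed
  qed
qed

lemma dyck_lv: "dyck w \<longleftrightarrow> lv 0 w = Some 0"
  unfolding dyck_def lv_walk by auto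

definition tot :: "bool list \<Rightarrow> int" where "tot w = sum_list (map step w)"

lemma tot_simps[simp]: "tot [] = 0" "tot (b#w) = step b + tot w" "tot (u@v) = tot u + tot v"
  by (auto simp: tot_def)

lemma lv_tot: "lv n w = Some m \<Longrightarrow> tot w = int m - int n"
proof (induction w arbitrary: n)
  case Nil then show ?case by simp
next
  case (Cons b u) then show ?case by (cases b; cases n) (auto simp: step_def)
qed

lemma lv_even: "lv n w = Some m \<Longrightarrow> even (length w + n + m)"
proof (induction w arbitrary: n)
  case Nil then show ?case by simp
next
  case (Cons b u)
  show ?case
  proof (cases b)
    case True
    then have "even (length u + Suc n + m)" using Cons by (intro Cons.IH) simp
    then show ?thesis using True by simp
  next
    case False
    then obtain k where k: "n = Suc k" "lv k u = Some m" using Cons.prems by (cases n) auto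
    then have "even (length u + k + m)" by (intro Cons.IH)
    then show ?thesis using k by simp
  qed
qed

lemma lv_split: "lv (Suc n) w = Some 0 \<Longrightarrow>
   \<exists>u v. w = u @ False # v \<and> lv 0 u = Some 0 \<and> lv n v = Some 0"
proof (induction "length w" arbitrary: w n rule: less_induct)
  case less
  show ?case
  proof (cases w)
    case Nil then show ?thesis using less by simp
  next
    case (Cons b w')
    show ?thesis
    proof (cases b)
      case False
      then show ?thesis using less Cons by (intro exI[of _ "[]"] exI[of _ w']) simp
    next
      case True
      then have "lv (Suc (Suc n)) w' = Some 0" using less Cons by simp
      then obtain u1 v1 where 1: "w' = u1 @ False # v1" "lv 0 u1 = Some 0" "lv (Suc n) v1 = Some 0"
        using less(1)[of w' "Suc n"] Cons by auto
      then obtain u2 v2 where 2: "v1 = u2 @ False # v2" "lv 0 u2 = Some 0" "lv n v2 = Some 0"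
        using less(1)[of v1 n] Cons by auto
      have "lv 1 u1 = Some 1" using lv_shift[OF 1(2), of 1] by simp
      then have "lv 0 (True # u1 @ False # u2) = Some 0"
        using 2 by (simp add: lv_append)
      then show ?thesis using 1 2 Cons True
        by (intro exI[of _ "True # u1 @ False # u2"] exI[of _ v2]) auto
    qed
  qed
qed

definition Dy :: "bool list set" where "Dy = {w. lv 0 w = Some 0}"

definition phi :: "bool list \<times> bool list \<Rightarrow> bool list" where
  "phi uv = True # fst uv @ False # snd uv"

lemma Dy_decomp: "Dy = insert [] (phi ` (Dy \<times> Dy))"
proof (intro equalityI subsetI)
  fix w assume w: "w \<in> Dy"
  show "w \<in> insert [] (phi ` (Dy \<times> Dy))"
  proof (cases w)
    case Nil then show ?thesis by simp
  next
    case (Cons b w')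
    then have "b" using w by (cases b) (auto simp: Dy_def)
    then have "lv (Suc 0) w' = Some 0" using w Cons by (simp add: Dy_def)
    from lv_split[OF this] obtain u v where "w' = u @ False # v" "lv 0 u = Some 0" "lv 0 v = Some 0"
      by auto
    then show ?thesis using Cons \<open>b\<close>
      by (auto simp: phi_def Dy_def image_iff intro!: bexI[of _ "(u,v)"])
  qed
next
  fix w assume "w \<in> insert [] (phi ` (Dy \<times> Dy))"
  then show "w \<in> Dy"
  proof
    assume "w = []" then show ?thesis by (simp add: Dy_def)
  next
    assume "w \<in> phi ` (Dy \<times> Dy)"
    then obtain u v where "w = phi (u,v)" "lv 0 u = Some 0" "lv 0 v = Some 0"
      by (auto simp: Dy_def)
    moreover have "lv 1 u = Some 1" using lv_shift[OF \<open>lv 0 u = Some 0\<close>, of 1] by simp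
    ultimately show ?thesis by (simp add: Dy_def phi_def lv_append)
  qed
qed

lemma phi_inj: "inj_on phi (Dy \<times> Dy)"
proof (rule inj_onI)
  fix a b assume a: "a \<in> Dy \<times> Dy" and b: "b \<in> Dy \<times> Dy" and eq: "phi a = phi b"
  obtain u v u' v' where ab: "a = (u,v)" "b = (u',v')" by (cases a, cases b)
  have u: "lv 0 u = Some 0" and u': "lv 0 u' = Some 0" using a b ab by (auto simp: Dy_def)
  have e: "u @ False # v = u' @ False # v'" using eq ab by (simp add: phi_def)
  then obtain us where "(u = u' @ us \<and> us @ False # v = False # v') \<or> (u' = u @ us \<and> False # v = us @ False # v')"
    by (auto simp: append_eq_append_conv2)
  then have "u = u'"
  proof
    assume h: "u = u' @ us \<and> us @ False # v = False # v'"
    show "u = u'"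
    proof (cases us)
      case Nil then show ?thesis using h by simp
    next
      case (Cons c us')
      then have "c = False" using h by simp
      then have "lv 0 u = None" using h u' Cons by (simp add: lv_append)
      then show ?thesis using u by simp
    qed
  next
    assume h: "u' = u @ us \<and> False # v = us @ False # v'"
    show "u = u'"
    proof (cases us)
      case Nil then show ?thesis using h by simp
    next
      case (Cons c us')
      then have "c = False" using h by simp
      then have "lv 0 u' = None" using h u Cons by (simp add: lv_append)
      then show ?thesis using u' by simp
    qed
  qed
  then show "a = b" using e ab by simp
qed

lemma nil_notin_phi: "[] \<notin> phi ` A"
  by (auto simp: phi_def)




definition gg :: "nat \<Rightarrow> int \<Rightarrow> real" where
  "gg n1 h = (if h < int n1 - 2 then max 0 (real_of_int (h + 3)) else 0)"

fun G :: "nat \<Rightarrow> int \<Rightarrow> bool list \<Rightarrow> real" where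
  "G n1 h [] = 0"
| "G n1 h (b#w) = (if b then 0 else gg n1 (h - 1)) + G n1 (h + step b) w"

lemma gg_bounds: "0 \<le> gg n1 h" "gg n1 h \<le> real n1 + 1"
  by (auto simp: gg_def)

lemma G_append: "G n1 h (u@v) = G n1 h u + G n1 (h + tot u) v"
  by (induction u arbitrary: h) (auto simp: algebra_simps)

lemma G_bounds: "0 \<le> G n1 h w" "G n1 h w \<le> (real n1 + 1) * real (length w)"
proof (induction w arbitrary: h)
  case Nil
  { case 1 show ?case by simp }
  { case 2 show ?case by simp }
next
  case (Cons b w)
  { case 1 show ?case using Cons gg_bounds[of n1] by simp }
  { case 2
    have A: "(if b then 0 else gg n1 (h-1)) \<le> real n1 + 1" using gg_bounds[of n1 "h-1"] by simp
    have B: "G n1 (h+step b) w \<le> (real n1+1)*real(length w)" by (rule Cons(2))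
    have C: "G n1 h (b#w) = (if b then 0 else gg n1 (h-1)) + G n1 (h+step b) w" by simp
    have D: "(real n1 + 1) * real (length (b#w)) = (real n1+1)*real(length w) + (real n1 + 1)"
      by (simp add: algebra_simps)
    show ?case unfolding C D using A B by linarith }
qed

lemma G_zero: "lv n w \<noteq> None \<Longrightarrow> int n1 - 2 \<le> h - int n \<Longrightarrow> G n1 h w = 0"
proof (induction w arbitrary: n h)
  case Nil then show ?case by simp
next
  case (Cons b w)
  show ?case
  proof (cases b)
    case True
    then show ?thesis using Cons.prems by (simp add: step_def Cons.IH[of "Suc n"])
  next
    case False
    then obtain k where k: "n = Suc k" "lv k w \<noteq> None" using Cons.prems by (cases n) auto
    have "G n1 (h - 1) w = 0" using k Cons.prems by (intro Cons.IH[of k]) auto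
    moreover have "gg n1 (h - 1) = 0" using k Cons.prems by (simp add: gg_def)
    ultimately show ?thesis using False by (simp add: step_def)
  qed
qed

lemma Dh_G:
  assumes "\<forall>i\<le>length w. h + walk w i \<ge> -3"
  shows "(\<Sum>i\<in>{1..length w}. if walk w i < walk w (i - 1) \<and> h + walk w i < int n1 - 2
      then real_of_int (h + walk w i + 3) else 0) = G n1 h w"
  using assms
proof (induction w arbitrary: h)
  case Nil then show ?case by simp
next
  case (Cons b w)
  define f where "f = (\<lambda>i. if walk (b#w) i < walk (b#w) (i - 1) \<and> h + walk (b#w) i < int n1 - 2
      then real_of_int (h + walk (b#w) i + 3) else 0)"
  have "(\<Sum>i\<in>{1..length (b#w)}. f i) = f 1 + (\<Sum>i\<in>{Suc 1..Suc (length w)}. f i)"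
    using sum.atLeast_Suc_atMost[of 1 "length (b#w)" f] by simp
  also have "(\<Sum>i\<in>{Suc 1..Suc (length w)}. f i) = (\<Sum>i\<in>{1..length w}. f (Suc i))"
    by (rule sum.shift_bounds_cl_Suc_ivl)
  also have "\<dots> = (\<Sum>i\<in>{1..length w}. if walk w i < walk w (i - 1) \<and> (h + step b) + walk w i < int n1 - 2
      then real_of_int ((h + step b) + walk w i + 3) else 0)"
  proof (rule sum.cong)
    fix i assume "i \<in> {1..length w}"
    then obtain j where j: "i = Suc j" by (cases i) auto
    show "f (Suc i) = (if walk w i < walk w (i - 1) \<and> (h + step b) + walk w i < int n1 - 2
      then real_of_int ((h + step b) + walk w i + 3) else 0)"
      unfolding f_def j by (simp add: algebra_simps)
  qed simp
  also have "\<dots> = G n1 (h + step b) w"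
  proof (rule Cons.IH, intro allI impI)
    fix i assume "i \<le> length w"
    then have "h + walk (b#w) (Suc i) \<ge> -3" using Cons.prems by auto
    then show "h + step b + walk w i \<ge> -3" by simp
  qed
  finally have 1: "(\<Sum>i\<in>{1..length (b#w)}. f i) = f 1 + G n1 (h + step b) w" .
  have "h + walk (b#w) (Suc 0) \<ge> -3" using Cons.prems by auto
  then have "f 1 = (if b then 0 else gg n1 (h - 1))"
    by (auto simp: f_def gg_def step_def)
  then show ?case using 1 unfolding f_def by simp
qed

lemma walk_append_le: "i \<le> length w \<Longrightarrow> walk (w @ v) i = walk w i"
  by (simp add: walk_def)

lemma walk_full: "walk w (length w) = tot w"
  by (simp add: walk_def tot_def)

lemma Dsum_G:
  assumes "n1 \<ge> 2" "w \<in> Dy"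
  shows "Dsum n1 (w @ [False]) = G n1 0 w + 2"
proof -
  have lw: "lv 0 w = Some 0" using assms by (simp add: Dy_def)
  then have nn: "\<forall>i\<le>length w. 0 \<le> walk w i" and t0: "walk w (length w) = 0"
    using lv_walk[of 0 w] by (auto split: if_splits)
  have cond: "\<forall>i\<le>length (w @ [False]). (0::int) + walk (w @ [False]) i \<ge> -3"
  proof (intro allI impI)
    fix i assume i: "i \<le> length (w @ [False])"
    show "(0::int) + walk (w @ [False]) i \<ge> -3"
    proof (cases "i \<le> length w")
      case True then show ?thesis using nn walk_append_le[OF True] by force
    next
      case False
      then have "i = length (w @ [False])" using i by simp
      then show ?thesis using t0 walk_full[of "w @ [False]"] by (simp add: walk_full step_def)
    qed
  qed
  have "Dsum n1 (w @ [False]) = G n1 0 (w @ [False])"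
    using Dh_G[OF cond, of n1] unfolding Dsum_def add_0 by (simp only: conj_commute)
  also have "\<dots> = G n1 0 w + 2"
    using assms(1) t0 by (simp add: G_append walk_full gg_def step_def)
  finally show ?thesis .
qed




lemma has_sum_prod:
  fixes a b :: "'a \<Rightarrow> real"
  assumes ha: "(a has_sum A) S" and hb: "(b has_sum B) T"
  shows "((\<lambda>(u,v). a u * b v) has_sum (A*B)) (S \<times> T)"
proof -
  have sa: "(\<lambda>u. norm (a u)) summable_on S" using ha summable_on_iff_abs_summable_on_real summable_on_def by blast
  have sb: "(\<lambda>v. norm (b v)) summable_on T" using hb summable_on_iff_abs_summable_on_real summable_on_def by blast
  have "Infinite_Sum.abs_summable_on (\<lambda>(u,v). a u * b v) (S \<times> T)"
  proof (subst Infinite_Sum.abs_summable_on_Sigma_iff, intro conjI ballI)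
    fix u assume "u \<in> S"
    show "Infinite_Sum.abs_summable_on (\<lambda>v. case (u, v) of (u, v) \<Rightarrow> a u * b v) T"
      using summable_on_cmult_right[OF sb, of "norm (a u)"] by (simp add: abs_mult)
  next
    have "(\<lambda>u. norm (a u) * infsum (\<lambda>v. norm (b v)) T) summable_on S"
      by (rule summable_on_cmult_left[OF sa])
    then have "(\<lambda>u. norm (norm (a u) * infsum (\<lambda>v. norm (b v)) T)) summable_on S"
      by (simp add: abs_mult infsum_nonneg)
    then show "Infinite_Sum.abs_summable_on (\<lambda>x. \<Sum>\<^sub>\<infinity>y\<in>T. norm (case (x, y) of (u, v) \<Rightarrow> a u * b v)) S"
    proof -
      have sb': "(\<lambda>v. \<bar>b v\<bar>) summable_on T" using sb by simp
      have "infsum (\<lambda>y. \<bar>a u\<bar> * \<bar>b y\<bar>) T = \<bar>a u\<bar> * infsum (\<lambda>y. \<bar>b y\<bar>) T" for u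
        by (rule infsum_cmult_right) (use sb' in simp)
      then show ?thesis using \<open>(\<lambda>u. norm (norm (a u) * infsum (\<lambda>v. norm (b v)) T)) summable_on S\<close>
        by (simp add: abs_mult)
    qed
  qed
  then have sm: "(\<lambda>(u,v). a u * b v) summable_on S \<times> T"
    using summable_on_iff_abs_summable_on_real by blast
  show ?thesis
  proof (rule has_sum_SigmaI[where g = "\<lambda>u. a u * B"])
    fix u assume "u \<in> S"
    show "((\<lambda>v. case (u, v) of (u, v) \<Rightarrow> a u * b v) has_sum a u * B) T"
      using has_sum_cmult_right[OF hb, of "a u"] by simp
  next
    show "((\<lambda>u. a u * B) has_sum A * B) S" by (rule has_sum_cmult_left[OF ha])
  qed (use sm in auto)
qed

lemma card_len: "card {w::bool list. length w = L} = 2 ^ L"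
  using card_lists_length_eq[of "UNIV::bool set" L] by simp

lemma finite_len: "finite {w::bool list. length w = L}"
  using finite_lists_length_eq[of "UNIV::bool set" L] by simp

lemma sum_len: "sum (\<lambda>w::bool list. g (length w)) {w. length w \<le> N} = (\<Sum>L\<le>N. 2^L * (g L :: real))"
proof -
  have e: "{w::bool list. length w \<le> N} = (\<Union>L\<in>{..N}. {w. length w = L})" by auto
  have "sum (\<lambda>w::bool list. g (length w)) (\<Union>L\<in>{..N}. {w. length w = L})
      = (\<Sum>L\<le>N. sum (\<lambda>w::bool list. g (length w)) {w. length w = L})"
    by (rule sum.UNION_disjoint) (auto simp: finite_len)
  also have "\<dots> = (\<Sum>L\<le>N. 2^L * g L)"
    by (rule sum.cong) (auto simp: card_len)
  finally show ?thesis using e by simp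
qed

lemma crude:
  fixes x :: real
  assumes "0 < x" "x < 1/4"
  shows "(\<lambda>w::bool list. x^(length w div 2) * (real (length w) + 1)) summable_on UNIV"
proof -
  define s where "s = sqrt x"
  have q: "sqrt (1/4) = (1/2::real)" by (rule real_sqrt_unique) (auto simp: power2_eq_square)
  have "sqrt x < sqrt (1/4)" using assms by (simp only: real_sqrt_less_iff)
  then have s0: "0 < s" and s1: "s < 1/2" using assms q by (auto simp: s_def)
  have x: "x = s^2" using assms by (simp add: s_def)
  define c where "c = 2 * s"
  have c0: "0 \<le> c" and c1: "c < 1" using s0 s1 by (auto simp: c_def)
  have "summable (\<lambda>n. diffs (\<lambda>_. 1::real) n * c ^ n)"
    by (rule termdiff_converges[where K=1]) (use c0 c1 in auto)
  then have sm: "summable (\<lambda>L. (real L + 1) * c ^ L)" by (simp add: diffs_def add.commute)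
  have bnd: "2^L * (x^(L div 2) * (real L + 1)) \<le> ((real L + 1) * c ^ L) / s" for L
  proof -
    have "x^(L div 2) * s = s^(2*(L div 2) + 1)" using x by (simp add: power_mult)
    also have "\<dots> \<le> s^L" by (rule power_decreasing) (use s0 s1 in auto)
    finally have "x^(L div 2) \<le> s^L / s" using s0 by (simp add: field_simps)
    then have "2^L * (x^(L div 2) * (real L + 1)) \<le> 2^L * (s^L / s * (real L + 1))"
      by (intro mult_left_mono mult_right_mono) auto
    also have "\<dots> = ((real L + 1) * c ^ L) / s" by (simp add: c_def power_mult_distrib)
    finally show ?thesis .
  qed
  show ?thesis
  proof (rule nonneg_bdd_above_summable_on)
    show "bdd_above (sum (\<lambda>w::bool list. x^(length w div 2) * (real (length w) + 1)) ` {F. F \<subseteq> UNIV \<and> finite F})"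
    proof (rule bdd_aboveI2)
      fix F :: "bool list set" assume "F \<in> {F. F \<subseteq> UNIV \<and> finite F}"
      then have F: "finite F" by simp
      define N where "N = Max (insert 0 (length ` F))"
      have sub: "F \<subseteq> {w. length w \<le> N}" using F by (auto simp: N_def)
      have fin: "finite {w::bool list. length w \<le> N}"
        using finite_lists_length_le[of "UNIV::bool set" N] by simp
      have "sum (\<lambda>w::bool list. x^(length w div 2) * (real (length w) + 1)) F
          \<le> sum (\<lambda>w::bool list. x^(length w div 2) * (real (length w) + 1)) {w. length w \<le> N}"
        by (rule sum_mono2[OF fin sub]) (use assms in auto)
      also have "\<dots> = (\<Sum>L\<le>N. 2^L * (x^(L div 2) * (real L + 1)))" by (rule sum_len)
      also have "\<dots> \<le> (\<Sum>L\<le>N. ((real L + 1) * c ^ L) / s)" by (rule sum_mono) (rule bnd)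
      also have "\<dots> \<le> (\<Sum>L. ((real L + 1) * c ^ L) / s)"
        by (rule sum_le_suminf) (use sm s0 c0 in \<open>auto intro!: summable_divide\<close>)
      finally show "sum (\<lambda>w::bool list. x^(length w div 2) * (real (length w) + 1)) F \<le> (\<Sum>L. ((real L + 1) * c ^ L) / s)" .
    qed
  qed (use assms in auto)
qed

lemma Dy_has_sum:
  fixes f :: "bool list \<Rightarrow> real"
  assumes "((\<lambda>uv. f (phi uv)) has_sum S) (Dy \<times> Dy)"
  shows "(f has_sum (f [] + S)) Dy"
proof -
  have "(f has_sum S) (phi ` (Dy \<times> Dy))"
    using has_sum_reindex[OF phi_inj, of f S] assms by (simp add: comp_def)
  then have "(f has_sum (f [] + S)) (insert [] (phi ` (Dy \<times> Dy)))"
    by (rule has_sum_insert[rotated]) (rule nil_notin_phi)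
  then show ?thesis using Dy_decomp by simp
qed

lemma len_phi: "u \<in> Dy \<Longrightarrow> v \<in> Dy \<Longrightarrow> length (phi (u,v)) div 2 = Suc (length u div 2 + length v div 2)"
  using lv_even[of 0 u 0] lv_even[of 0 v 0] by (auto simp: Dy_def phi_def elim!: evenE)

lemma tot_Dy: "u \<in> Dy \<Longrightarrow> tot u = 0"
  using lv_tot[of 0 u 0] by (simp add: Dy_def)

lemma G_phi: "u \<in> Dy \<Longrightarrow> v \<in> Dy \<Longrightarrow> G n1 h (phi (u,v)) = G n1 (h+1) u + gg n1 h + G n1 h v"
  by (simp add: phi_def G_append tot_Dy step_def)





lemma alg1: 
  fixes p q h :: real
  assumes "0 < p" "p - q \<noteq> 0"
  shows "q / (p * (p - q)) * h + (q^2 + 3 * q * (p - q)) / (p * (p - q)^2)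
     = q/p * (q / (p * (p - q)) * (h+1) + (q^2 + 3 * q * (p - q)) / (p * (p - q)^2) + (h+3)/p)"
  using assms by (simp add: field_simps) (simp add: eval_nat_numeral algebra_simps)
lemma alg2: 
  fixes p q :: real
  assumes "0 < p" "p - q \<noteq> 0"
  shows "p * ((q^2 + 3 * q * (p - q)) / (p * (p - q)^2)) + 2 = p / (p - q)^2 * (2*p - q)"
  using assms by (simp add: field_simps) (simp add: eval_nat_numeral algebra_simps)
lemma alg3: 
  fixes p q m :: real
  assumes "0 < p" "p - q \<noteq> 0"
  shows "p * (q / (p * (p - q)) * m + (q^2 + 3 * q * (p - q)) / (p * (p - q)^2)) = p / (p-q)^2 * (p + (m + 2) * (p - q)) * (q/p)"
  using assms by (simp add: field_simps) (simp add: eval_nat_numeral algebra_simps)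

theorem proposition10:
  fixes p q :: real and n1 :: nat
  assumes "0 < q" "q < p" "p + q = 1" "n1 \<ge> 2"
  shows "((\<lambda>w'. cond_prob p q w' * Dsum n1 (w' @ [False])) has_sum
          (p / (p - q)^2 * (2*p - q - (p + real n1 * (p - q)) * (q / p) ^ (n1 - 1))))
         {w'. dyck w'}"
proof -
  have p0: "0 < p" using assms by simp
  define x where "x = p * q"
  have x0: "0 < x" using assms by (simp add: x_def)
  have "(p - q)^2 > 0" using assms by simp
  moreover have "4*(p*q) = (p+q)^2 - (p-q)^2" by (simp add: power2_eq_square algebra_simps)
  moreover have "(p+q)^2 = 1" using assms(3) by simp
  ultimately have x4: "x < 1/4" unfolding x_def by linarith
  define wt where "wt w = x ^ (length w div 2)" for w :: "bool list"
  have wt_nil: "wt [] = 1" by (simp add: wt_def)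
  have wt0: "0 \<le> wt w" for w using x0 by (simp add: wt_def)
  have wt_phi: "wt (phi (u,v)) = x * (wt u * wt v)" if "u \<in> Dy" "v \<in> Dy" for u v
    using len_phi[OF that] by (simp add: wt_def power_add)
  have cr: "(\<lambda>w. wt w * (real (length w) + 1)) summable_on Dy"
    using summable_on_subset[OF crude[OF x0 x4]] by (simp add: wt_def)
  have sC: "wt summable_on Dy"
  proof (rule summable_on_comparison_test[OF cr])
    fix w show "wt w \<le> wt w * (real (length w) + 1)"
      using mult_left_mono[of 1 "real (length w)+1" "wt w"] wt0[of w] by simp
  qed (auto simp: wt0)
  have sM: "(\<lambda>w. wt w * real (length w div 2)) summable_on Dy"
  proof (rule summable_on_comparison_test[OF cr])
    fix w show "wt w * real (length w div 2) \<le> wt w * (real (length w) + 1)"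
      using mult_left_mono[of "real (length w div 2)" "real (length w)+1" "wt w"] wt0[of w] by simp
  qed (auto simp: wt0)
  have sE: "(\<lambda>w. wt w * G n1 h w) summable_on Dy" for h
  proof (rule summable_on_comparison_test[OF summable_on_cmult_right[OF cr, of "real n1 + 1"]])
    fix w
    have "wt w * G n1 h w \<le> wt w * ((real n1 + 1) * real (length w))"
      by (rule mult_left_mono[OF G_bounds(2) wt0])
    also have "\<dots> \<le> (real n1 + 1) * (wt w * (real (length w) + 1))"
      using wt0[of w] by (simp add: algebra_simps)
    finally show "wt w * G n1 h w \<le> (real n1 + 1) * (wt w * (real (length w) + 1))" .
    show "0 \<le> wt w * G n1 h w" using wt0 G_bounds(1) by simp
  qed
  define C where "C = infsum wt Dy"
  define M where "M = infsum (\<lambda>w. wt w * real (length w div 2)) Dy"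
  define E where "E h = infsum (\<lambda>w. wt w * G n1 h w) Dy" for h
  have hC: "(wt has_sum C) Dy" using sC by (simp add: C_def)
  have hM: "((\<lambda>w. wt w * real (length w div 2)) has_sum M) Dy" using sM by (simp add: M_def)
  have hE: "((\<lambda>w. wt w * G n1 h w) has_sum E h) Dy" for h using sE[of h] by (simp add: E_def)
  have M0: "0 \<le> M" unfolding M_def by (rule infsum_nonneg) (simp add: wt0)

  have "((\<lambda>uv. wt (phi uv)) has_sum (x * (C * C))) (Dy \<times> Dy)"
  proof -
    have "((\<lambda>(u,v). x * (wt u * wt v)) has_sum (x * (C * C))) (Dy \<times> Dy)"
      using has_sum_cmult_right[OF has_sum_prod[OF hC hC], of x] by (simp add: case_prod_unfold)
    then show ?thesis by (rule has_sum_cong[THEN iffD1, rotated]) (auto simp: wt_phi)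
  qed
  from Dy_has_sum[OF this] have "(wt has_sum (1 + x * (C*C))) Dy" by (simp add: wt_nil)
  then have recC: "C = 1 + x * (C * C)" using hC has_sum_unique by blast

  have "((\<lambda>uv. wt (phi uv) * real (length (phi uv) div 2)) has_sum
      (x * (C * C) + x * (M * C) + x * (C * M))) (Dy \<times> Dy)"
  proof -
    have "((\<lambda>(u,v). x * (wt u * wt v) + x * ((wt u * real (length u div 2)) * wt v)
        + x * (wt u * (wt v * real (length v div 2)))) has_sum (x * (C * C) + x * (M * C) + x * (C * M))) (Dy \<times> Dy)"
      using has_sum_add[OF has_sum_add[OF has_sum_cmult_right[OF has_sum_prod[OF hC hC], of x]
          has_sum_cmult_right[OF has_sum_prod[OF hM hC], of x]]
          has_sum_cmult_right[OF has_sum_prod[OF hC hM], of x]]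
      by (simp add: case_prod_unfold)
    then show ?thesis
      by (rule has_sum_cong[THEN iffD1, rotated]) (auto simp: wt_phi len_phi algebra_simps)
  qed
  from Dy_has_sum[OF this] have "((\<lambda>w. wt w * real (length w div 2)) has_sum
      (x * (C * C) + x * (M * C) + x * (C * M))) Dy" by simp
  then have recM: "M = x * (C * C) + x * (M * C) + x * (C * M)" using hM has_sum_unique by blast

  have recE: "E h = x * (E (h+1) * C) + x * gg n1 h * (C * C) + x * (C * E h)" for h
  proof -
    have "((\<lambda>uv. wt (phi uv) * G n1 h (phi uv)) has_sum
      (x * (E (h+1) * C) + x * gg n1 h * (C * C) + x * (C * E h))) (Dy \<times> Dy)"
    proof -
      have "((\<lambda>(u,v). x * ((wt u * G n1 (h+1) u) * wt v) + x * gg n1 h * (wt u * wt v)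
          + x * (wt u * (wt v * G n1 h v))) has_sum (x * (E (h+1) * C) + x * gg n1 h * (C * C) + x * (C * E h))) (Dy \<times> Dy)"
        using has_sum_add[OF has_sum_add[OF has_sum_cmult_right[OF has_sum_prod[OF hE hC], of x]
            has_sum_cmult_right[OF has_sum_prod[OF hC hC], of "x * gg n1 h"]]
            has_sum_cmult_right[OF has_sum_prod[OF hC hE], of x]]
        by (simp add: case_prod_unfold)
      then show ?thesis
        by (rule has_sum_cong[THEN iffD1, rotated]) (auto simp: wt_phi G_phi algebra_simps)
    qed
    from Dy_has_sum[OF this] have "((\<lambda>w. wt w * G n1 h w) has_sum
      (x * (E (h+1) * C) + x * gg n1 h * (C * C) + x * (C * E h))) Dy" by simp
    then show ?thesis using hE has_sum_unique by blast
  qed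

  have "(p * C - 1) * (q * C - 1) = 0"
  proof -
    have "(p*C-1)*(q*C-1) = p*q*(C*C) - (p+q)*C + 1" by (simp add: algebra_simps)
    moreover have "(p+q)*C = C" using assms(3) by simp
    ultimately show ?thesis using recC unfolding x_def by linarith
  qed
  moreover have "q * C \<noteq> 1"
  proof
    assume qC: "q * C = 1"
    then have xC: "x * C = p" by (simp add: x_def)
    have "M = (x*C) * C + (x*C) * M + (x*C) * M" using recM by (simp add: algebra_simps)
    then have "M = p * C + 2 * p * M" unfolding xC by (simp add: algebra_simps)
    moreover have "p * C > 0"
    proof -
      have "0 < q * C" using qC by simp
      then have "0 < C" using assms(1) zero_less_mult_pos by blast
      then show ?thesis using p0 by simp
    qed
    moreover have "1 * M \<le> (2 * p) * M" using M0 assms by (intro mult_right_mono) auto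
    ultimately show False by linarith
  qed
  ultimately have pC: "p * C = 1" by simp
  then have xC: "x * C = q" by (simp add: x_def algebra_simps)

  have recE2: "p * E h = q * E (h+1) + q * gg n1 h / p" for h
  proof -
    have "E h = (x*C) * E (h+1) + (x*C) * gg n1 h * C + (x*C) * E h"
      using recE[of h] by (simp add: algebra_simps)
    then have "E h = q * E (h+1) + q * gg n1 h * C + q * E h" unfolding xC .
    moreover have "C = 1 / p" using pC p0 by (simp add: field_simps)
    ultimately have "E h = q * E h + (q * E (h+1) + q * gg n1 h / p)" by simp
    moreover have "p * E h = E h - q * E h"
    proof -
      have "(p+q) * E h = E h" using assms(3) by simp
      moreover have "(p+q)*E h = p*E h + q*E h" by (rule distrib_right)
      ultimately show ?thesis by linarith
    qed
    ultimately show ?thesis by linarith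
  qed
  have Ezero: "E h = 0" if "int n1 - 2 \<le> h" for h
  proof -
    have "E h = infsum (\<lambda>w. 0::real) Dy"
      unfolding E_def
      by (rule infsum_cong) (use that G_zero[of 0 _ n1 h] in \<open>auto simp: Dy_def\<close>)
    then show ?thesis by simp
  qed
  obtain m where m: "n1 = m + 2" using assms(4) by (metis add.commute le_Suc_ex)
  define r where "r = q / p"
  define a where "a = q / (p * (p - q))"
  define b where "b = (q^2 + 3 * q * (p - q)) / (p * (p - q)^2)"
  define e where "e h = a * h + b - (a * real m + b) * r ^ nat (int m - h)" for h :: int
  have pq: "p - q \<noteq> 0" using assms by simp
  have key: "e h = r * (e (h+1) + (h + 3) / p)" if "h < int m" for h
  proof -
    define k where "k = nat (int m - h - 1)"
    have k: "nat (int m - h) = Suc k" "nat (int m - (h+1)) = k" using that unfolding k_def by arith+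
    have I: "a * real_of_int h + b = r * (a * (real_of_int h+1) + b + (real_of_int h+3)/p)"
      unfolding a_def b_def r_def using alg1[OF p0 pq, of "real_of_int h"] by simp
    have "r * (e (h+1) + (real_of_int h + 3) / p) = r * (a * (real_of_int h+1) + b + (real_of_int h+3)/p) - (a * real m + b) * r ^ (Suc k)"
      unfolding e_def k by (simp add: algebra_simps)
    moreover have "e h = a * h + b - (a * real m + b) * r ^ (Suc k)"
      unfolding e_def k by simp
    ultimately show ?thesis using I by linarith
  qed
  have Ee: "E (int m - int k) = e (int m - int k)" if "k \<le> m" for k
    using that
  proof (induction k)
    case 0
    then show ?case using Ezero[of "int m"] m by (simp add: e_def)
  next
    case (Suc k)
    define h where "h = int m - int (Suc k)"
    have h1: "h + 1 = int m - int k" by (simp add: h_def)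
    have hlt: "h < int m" "0 \<le> h" using Suc.prems by (auto simp: h_def)
    have gh: "gg n1 h = h + 3" using hlt m by (simp add: gg_def)
    have "E h = r * (E (h+1) + (h+3)/p)"
      using recE2[of h] gh p0 unfolding r_def by (simp add: field_simps)
    also have "E (h+1) = e (h+1)" using Suc h1 by simp
    finally have "E h = e h" using key[OF hlt(1)] by simp
    then show ?case by (simp add: h_def)
  qed
  have E0: "E 0 = e 0" using Ee[of m] by simp
  have final: "p * E 0 + 2 = p / (p - q)^2 * (2*p - q - (p + real n1 * (p - q)) * (q / p) ^ (n1 - 1))"
  proof -
    define D where "D = p / (p - q)^2"
    have E0': "E 0 = b - (a * real m + b) * r ^ m" using E0 by (simp add: e_def)
    have "p * E 0 + 2 = (p * b + 2) - (p * (a * real m + b)) * r ^ m" unfolding E0' by (simp add: algebra_simps)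
    also have "p * b + 2 = D * (2*p - q)" unfolding D_def b_def using alg2[OF p0 pq] .
    also have "p * (a * real m + b) = D * (p + (real m + 2) * (p - q)) * r"
      unfolding D_def a_def b_def r_def using alg3[OF p0 pq, of "real m"] .
    also have "D * (2*p - q) - D * (p + (real m + 2) * (p - q)) * r * r ^ m
       = D * (2*p - q - (p + real n1 * (p - q)) * (q / p) ^ (n1 - 1))"
      unfolding m r_def by (simp add: algebra_simps)
    finally show ?thesis unfolding D_def .
  qed
  have "((\<lambda>w. p * (wt w * G n1 0 w) + (2 * p) * wt w) has_sum (p * E 0 + 2 * p * C)) Dy"
    by (intro has_sum_add has_sum_cmult_right hE hC)
  moreover have "p * E 0 + 2 * p * C = p * E 0 + 2" using pC by (simp add: algebra_simps)
  ultimately have "((\<lambda>w. p * (wt w * G n1 0 w) + (2 * p) * wt w) has_sum (p * E 0 + 2)) Dy" by simp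
  then have "((\<lambda>w. cond_prob p q w * Dsum n1 (w @ [False])) has_sum (p * E 0 + 2)) Dy"
    by (subst has_sum_cong[where g = "\<lambda>w. p * (wt w * G n1 0 w) + (2 * p) * wt w"])
       (auto simp: Dsum_G[OF assms(4)] cond_prob_def wt_def x_def algebra_simps)
  moreover have "{w'. dyck w'} = Dy" by (auto simp: Dy_def dyck_lv)
  ultimately show ?thesis using final by simp
qed


end
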